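(* Under the setting and hypotheses (i),(ii) below, there exists a constant $C=C(W,F,R,l)>0$ such that for all integers $N>1$, all $\lambda>0$, all real $E\neq 0$, all $x\in\mathbb{T}$ and all $1\le\alpha,\alpha'\le Nl$, $$\frac{1}{Nl}\log\big|\tilde\mu_N(x,E)_{(\alpha,\alpha')}\big|\le -\frac{|p(\alpha)-p(\alpha')|}{Nl}\log(\lambda+|E|)+\log\Big(1+\frac{\lambda}{|E|}\Big)+C .$$
   Context: Let $l\ge1$ and let $W,R,F$ be $l\times l$ real symmetric matrix functions on $\mathbb{T}=\mathbb{R}/2\pi\mathbb{Z}$ such that (i) all entries of $W$ and all off-diagonal entries of $R,F$ are real analytic; (ii) the diagonal entries are $F_{ii}=\tilde\phi^F_{ii}/\phi^F_{ii}$, $R_{ii}=\tilde\phi^R_{ii}/\phi^R_{ii}$ with $\tilde\phi^F_{ii},\phi^F_{ii},\tilde\phi^R_{ii},\phi^R_{ii}$ real analytic, $\phi^F_{ii},\phi^R_{ii}$ having finitely many zeros. Let $M(x)=\mathrm{diag}\{\phi^F_{ii}(x)\}_{i}\,\mathrm{diag}\{\phi^R_{ii}(x)\}_{i}$ and, for fixed $\omega\in\mathbb{T}$, $M_j(x)=M(x+j\omega)$, $W_n(x)=W(x+n\omega)$, $R_n(x)=R(x+n\omega)$, $F_n(x)=F(x+n\omega)$. $H_\lambda(x)$ is the operator $[H_\lambda(x)\vec\varphi]_n=-(W_{n+1}(x)\vec\varphi_{n+1}+W_n^T(x)\vec\varphi_{n-1}+R_n(x)\vec\varphi_n)+\lambda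 F_n(x)\vec\varphi_n$ on $\ell^2(\mathbb{Z},\mathbb{R}^l)$, and $H_N(x)$ is its restriction to the sites $[1,N]$, an $Nl\times Nl$ matrix ($N\times N$ blocks of size $l\times l$). Define $\tilde H_N(x,E)=(H_N(x)-E)\,\mathrm{diag}\{\tfrac{1}{\sqrt{1+E^2}}M_j(x),\ 1\le j\le N\}$ (block-diagonal); its entries are real analytic in $x$. $\tilde\mu_N(x,E)_{(\alpha,\alpha')}$ denotes the $(\alpha',\alpha)$-minor of $\tilde H_N(x,E)$ (determinant after deleting row $\alpha'$ and column $\alpha$). Every $1\le\alpha\le Nl$ is written uniquely as $\alpha=p(\alpha)l+q(\alpha)$ with $p(\alpha)\in\{0,\dots,N-1\}$, $q(\alpha)\in\{1,\dots,l\}$. *)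

theory Defs
  imports Complex_Main "Jordan_Normal_Form.Determinant"
begin

definition real_analytic :: "(real \<Rightarrow> real) \<Rightarrow> bool" where
  "real_analytic f \<longleftrightarrow> (\<forall>x. \<exists>r>0. \<exists>c::nat \<Rightarrow> real.
      \<forall>y. \<bar>y - x\<bar> < r \<longrightarrow> (\<lambda>n. c n * (y - x) ^ n) sums f y)"

(* functions on T = R / 2 pi Z are 2pi-periodic functions on R *)
definition periodic_2pi :: "(real \<Rightarrow> real) \<Rightarrow> bool" where
  "periodic_2pi f \<longleftrightarrow> (\<forall>x. f (x + 2 * pi) = f x)"

(* M(y)_{bb} = phi^F_bb(y) * phi^R_bb(y)   (0-based index b < l) *)
definition Mdiag :: "(nat \<Rightarrow> real \<Rightarrow> real) \<Rightarrow> (nat \<Rightarrow> real \<Rightarrow> real) \<Rightarrow> nat \<Rightarrow> real \<Rightarrow> real" where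
  "Mdiag phF phR b y = phF b y * phR b y"

(* The matrix  tilde H_N(x,E) = (H_N(x) - E) diag{M_j(x)/sqrt(1+E^2), 1<=j<=N},
   an (N l) x (N l) matrix, with 0-based global indices i = (site-1)*l + a.
   Matrix entries W a b, R a b, F a b are 0-based (a,b < l).
   The diagonal entries of the diagonal blocks are written in the cancelled
   (real analytic) form  lambda*phtF*phR - phtR*phF - E*phF*phR, i.e.
   (lambda F_aa - R_aa - E) * phF_aa * phR_aa with F_aa = phtF/phF, R_aa = phtR/phR. *)
definition tildeH ::
  "nat \<Rightarrow> nat \<Rightarrow> (nat \<Rightarrow> nat \<Rightarrow> real \<Rightarrow> real) \<Rightarrow> (nat \<Rightarrow> nat \<Rightarrow> real \<Rightarrow> real)
   \<Rightarrow> (nat \<Rightarrow> nat \<Rightarrow> real \<Rightarrow> real)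
   \<Rightarrow> (nat \<Rightarrow> real \<Rightarrow> real) \<Rightarrow> (nat \<Rightarrow> real \<Rightarrow> real)
   \<Rightarrow> (nat \<Rightarrow> real \<Rightarrow> real) \<Rightarrow> (nat \<Rightarrow> real \<Rightarrow> real)
   \<Rightarrow> real \<Rightarrow> real \<Rightarrow> real \<Rightarrow> real \<Rightarrow> real mat" where
  "tildeH l N W R F phF phtF phR phtR \<omega> lam E x =
     mat (N * l) (N * l) (\<lambda>(i, j).
       (let n = i div l; a = i mod l; m = j div l; b = j mod l;
            site = (\<lambda>k::nat. x + real (k + 1) * \<omega>) in
        (if m = n then
           (if a = b then
              lam * phtF a (site n) * phR a (site n)
              - phtR a (site n) * phF a (site n)
              - E * phF a (site n) * phR a (site n)
            else (lam * F a b (site n) - R a b (site n)) * Mdiag phF phR b (site n))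
         else if m = n + 1 then - W a b (site m) * Mdiag phF phR b (site m)
         else if n = m + 1 then - W b a (site n) * Mdiag phF phR b (site m)
         else 0) / sqrt (1 + E\<^sup>2)))"

definition tildemu ::
  "nat \<Rightarrow> nat \<Rightarrow> (nat \<Rightarrow> nat \<Rightarrow> real \<Rightarrow> real) \<Rightarrow> (nat \<Rightarrow> nat \<Rightarrow> real \<Rightarrow> real)
   \<Rightarrow> (nat \<Rightarrow> nat \<Rightarrow> real \<Rightarrow> real)
   \<Rightarrow> (nat \<Rightarrow> real \<Rightarrow> real) \<Rightarrow> (nat \<Rightarrow> real \<Rightarrow> real)
   \<Rightarrow> (nat \<Rightarrow> real \<Rightarrow> real) \<Rightarrow> (nat \<Rightarrow> real \<Rightarrow> real)
   \<Rightarrow> real \<Rightarrow> real \<Rightarrow> real \<Rightarrow> real \<Rightarrow> nat \<Rightarrow> nat \<Rightarrow> real" where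
  "tildemu l N W R F phF phtF phR phtR \<omega> lam E x \<alpha> \<alpha>' =
     det (mat_delete (tildeH l N W R F phF phtF phR phtR \<omega> lam E x) (\<alpha>' - 1) (\<alpha> - 1))"

(* alpha = p(alpha) l + q(alpha), q in {1..l} *)
definition pidx :: "nat \<Rightarrow> nat \<Rightarrow> nat" where
  "pidx l \<alpha> = (\<alpha> - 1) div l"

end

theory Submission imports Defs "HOL-Analysis.Analysis" begin

lemma abs_signof: "\<bar>(signof p :: real)\<bar> = 1"
  by (cases p rule: sign_cases) (auto simp: sign_def)

lemma det_weighted_bound:
  fixes M :: "real mat" and a b :: "nat \<Rightarrow> real"
  assumes M: "dim_row M = m" "dim_col M = m" and t: "t > 0"
  shows "\<bar>Determinant.det M\<bar> \<le> t powr (\<Sum>r\<in>{0..<m}. b r - a r) *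
     (\<Prod>r\<in>{0..<m}. \<Sum>c\<in>{0..<m}. \<bar>M $$ (r,c)\<bar> * t powr (a r - b c))"
proof -
  let ?P = "{p. p permutes {0..<m}}"
  let ?w = "\<lambda>r c. \<bar>M $$ (r,c)\<bar> * t powr (a r - b c)"
  have fin: "finite ?P" by (simp add: finite_permutations)
  have "\<bar>Determinant.det M\<bar> \<le> (\<Sum>p\<in>?P. \<bar>signof p * (\<Prod>i = 0..<m. M $$ (i, p i))\<bar>)"
    unfolding Determinant.det_def using M by simp
  also have "\<dots> = (\<Sum>p\<in>?P. t powr (\<Sum>r\<in>{0..<m}. b r - a r) * (\<Prod>i\<in>{0..<m}. ?w i (p i)))"
  proof (rule sum.cong[OF refl])
    fix p assume "p \<in> ?P"
    hence pp: "p permutes {0..<m}" by simp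
    have sb: "(\<Sum>i\<in>{0..<m}. b (p i)) = (\<Sum>i\<in>{0..<m}. b i)"
      using sum.permute[OF pp, of b] by (simp add: comp_def)
    have "(\<Prod>i\<in>{0..<m}. ?w i (p i)) = (\<Prod>i\<in>{0..<m}. \<bar>M $$ (i, p i)\<bar>) * (\<Prod>i\<in>{0..<m}. t powr (a i - b (p i)))"
      by (simp add: prod.distrib)
    also have "(\<Prod>i\<in>{0..<m}. t powr (a i - b (p i))) = t powr (\<Sum>i\<in>{0..<m}. a i - b (p i))"
      using t by (simp add: powr_sum)
    also have "(\<Sum>i\<in>{0..<m}. a i - b (p i)) = - (\<Sum>r\<in>{0..<m}. b r - a r)"
      using sb by (simp add: sum_subtractf)
    finally have "t powr (\<Sum>r\<in>{0..<m}. b r - a r) * (\<Prod>i\<in>{0..<m}. ?w i (p i))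
        = (\<Prod>i\<in>{0..<m}. \<bar>M $$ (i, p i)\<bar>) * (t powr (\<Sum>r\<in>{0..<m}. b r - a r) * t powr (- (\<Sum>r\<in>{0..<m}. b r - a r)))"
      by (simp add: algebra_simps)
    also have "\<dots> = (\<Prod>i\<in>{0..<m}. \<bar>M $$ (i, p i)\<bar>)"
      using t by (simp add: powr_add[symmetric])
    finally show "\<bar>signof p * (\<Prod>i = 0..<m. M $$ (i, p i))\<bar> = t powr (\<Sum>r\<in>{0..<m}. b r - a r) * (\<Prod>i\<in>{0..<m}. ?w i (p i))"
      by (simp add: abs_mult abs_signof abs_prod)
  qed
  also have "\<dots> = t powr (\<Sum>r\<in>{0..<m}. b r - a r) * (\<Sum>p\<in>?P. \<Prod>i\<in>{0..<m}. ?w i (p i))"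
    by (simp add: sum_distrib_left)
  also have "(\<Sum>p\<in>?P. \<Prod>i\<in>{0..<m}. ?w i (p i)) \<le> (\<Sum>g\<in>PiE {0..<m} (\<lambda>_. {0..<m}). \<Prod>i\<in>{0..<m}. ?w i (g i))"
  proof -
    have inj: "inj_on (\<lambda>p. restrict p {0..<m}) ?P"
    proof (rule inj_onI)
      fix p q assume "p \<in> ?P" "q \<in> ?P" "restrict p {0..<m} = restrict q {0..<m}"
      thus "p = q" unfolding permutes_def by (auto simp: fun_eq_iff restrict_def) (metis)
    qed
    have sub: "(\<lambda>p. restrict p {0..<m}) ` ?P \<subseteq> PiE {0..<m} (\<lambda>_. {0..<m})"
      by (auto simp: permutes_in_image)
    have "(\<Sum>p\<in>?P. \<Prod>i\<in>{0..<m}. ?w i (p i)) = (\<Sum>g\<in>(\<lambda>p. restrict p {0..<m}) ` ?P. \<Prod>i\<in>{0..<m}. ?w i (g i))"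
      by (subst sum.reindex[OF inj]) (auto intro!: sum.cong prod.cong)
    also have "\<dots> \<le> (\<Sum>g\<in>PiE {0..<m} (\<lambda>_. {0..<m}). \<Prod>i\<in>{0..<m}. ?w i (g i))"
      by (rule sum_mono2[OF _ sub]) (auto intro!: prod_nonneg finite_PiE)
    finally show ?thesis .
  qed
  also have "(\<Sum>g\<in>PiE {0..<m} (\<lambda>_. {0..<m}). \<Prod>i\<in>{0..<m}. ?w i (g i)) = (\<Prod>r\<in>{0..<m}. \<Sum>c\<in>{0..<m}. ?w r c)"
    by (rule prod_sum_PiE[symmetric]) auto
  finally show ?thesis by (simp add: mult_left_mono)
qed

lemma real_analytic_isCont:
  assumes "real_analytic f" shows "isCont f x"
proof -
  from assms obtain r c where r: "r > 0" and s: "\<And>y. \<bar>y - x\<bar> < r \<Longrightarrow> (\<lambda>n. c n * (y - x) ^ n) sums f y"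
    unfolding real_analytic_def by blast
  let ?g = "\<lambda>h. \<Sum>n. c n * h ^ n"
  have "summable (\<lambda>n. c n * (r/2) ^ n)"
    using s[of "x + r/2"] r by (simp add: sums_iff)
  hence g: "isCont ?g 0" by (rule isCont_powser) (use r in auto)
  have "isCont (\<lambda>y. ?g (y - x)) x"
  proof -
    have "isCont (\<lambda>y. y - x) x" by (intro continuous_intros)
    from isCont_o2[OF this] g show ?thesis by simp
  qed
  moreover have "eventually (\<lambda>y. f y = ?g (y - x)) (nhds x)"
  proof -
    have "eventually (\<lambda>y. y \<in> ball x r) (nhds x)"
      using r by (intro eventually_nhds_in_open) auto
    thus ?thesis
      by eventually_elim (use s in \<open>auto simp: dist_real_def sums_iff\<close>)
  qed
  ultimately show ?thesis using isCont_cong[of f "\<lambda>y. ?g (y - x)" x] by blast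
qed

lemma periodic_int:
  assumes "periodic_2pi f" shows "f (y + 2 * pi * real_of_int k) = f y"
proof -
  have nat: "f (z + 2 * pi * real n) = f z" for z n
  proof (induction n)
    case (Suc n)
    have "z + 2 * pi * real (Suc n) = (z + 2 * pi * real n) + 2 * pi" by (simp add: algebra_simps)
    then show ?case using assms Suc unfolding periodic_2pi_def by (metis)
  qed simp
  show ?thesis
  proof (cases "k \<ge> 0")
    case True then show ?thesis using nat[of y "nat k"] by simp
  next
    case False
    have "f y = f ((y + 2 * pi * real_of_int k) + 2 * pi * real (nat (-k)))"
      using False by simp
    then show ?thesis using nat by simp
  qed
qed

lemma analytic_periodic_bounded:
  assumes "real_analytic f" "periodic_2pi f" shows "\<exists>K. \<forall>y. \<bar>f y\<bar> \<le> K"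
proof -
  have "continuous_on {0..2*pi} f"
    using real_analytic_isCont[OF assms(1)] by (simp add: continuous_at_imp_continuous_on)
  hence "compact (f ` {0..2*pi})" by (rule compact_continuous_image) simp
  then obtain K where K: "\<And>z. z \<in> f ` {0..2*pi} \<Longrightarrow> \<bar>z\<bar> \<le> K"
    using compact_imp_bounded bounded_real by metis
  have "\<bar>f y\<bar> \<le> K" for y
  proof -
    define k where "k = \<lfloor>y / (2*pi)\<rfloor>"
    define z where "z = y - 2 * pi * real_of_int k"
    have "real_of_int k \<le> y / (2*pi)" "y / (2*pi) < real_of_int k + 1" unfolding k_def by linarith+
    hence "2*pi*real_of_int k \<le> y" "y < 2*pi*(real_of_int k + 1)"
      by (simp_all add: field_simps)
    hence "z \<in> {0..2*pi}" unfolding z_def by (auto simp: algebra_simps)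
    moreover have "f y = f z" using periodic_int[OF assms(2), of z k] unfolding z_def by simp
    ultimately show ?thesis using K by auto
  qed
  thus ?thesis by blast
qed

lemma abs_mult_le: "\<bar>x\<bar> \<le> A \<Longrightarrow> \<bar>y\<bar> \<le> B \<Longrightarrow> \<bar>x * y\<bar> \<le> A * (B::real)"
  by (simp add: abs_mult mult_mono')

lemma entry_bound:
  fixes W R F :: "nat \<Rightarrow> nat \<Rightarrow> real \<Rightarrow> real" and phF phtF phR phtR :: "nat \<Rightarrow> real \<Rightarrow> real"
  assumes l: "l \<ge> 1" and K: "K \<ge> 1"
    and bW: "\<And>a b y. a<l \<Longrightarrow> b<l \<Longrightarrow> \<bar>W a b y\<bar> \<le> K"
    and bF: "\<And>a b y. a<l \<Longrightarrow> b<l \<Longrightarrow> a\<noteq>b \<Longrightarrow> \<bar>F a b y\<bar> \<le> K"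
    and bR: "\<And>a b y. a<l \<Longrightarrow> b<l \<Longrightarrow> a\<noteq>b \<Longrightarrow> \<bar>R a b y\<bar> \<le> K"
    and bph: "\<And>a y. a<l \<Longrightarrow> \<bar>phF a y\<bar> \<le> K \<and> \<bar>phtF a y\<bar> \<le> K \<and> \<bar>phR a y\<bar> \<le> K \<and> \<bar>phtR a y\<bar> \<le> K"
    and lam: "lam > 0" and t: "t > 0" "t \<le> lam + \<bar>E\<bar> + 1" "1/t \<le> lam + \<bar>E\<bar> + 1"
    and ij: "i < N*l" "j < N*l"
  shows "\<bar>tildeH l N W R F phF phtF phR phtR \<omega> lam E x $$ (i,j)\<bar> * t powr (real (i div l) - real (j div l))
           \<le> K^3 * (lam + \<bar>E\<bar> + 1) / sqrt (1 + E\<^sup>2)"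
    and "tildeH l N W R F phF phtF phR phtR \<omega> lam E x $$ (i,j) \<noteq> 0 \<Longrightarrow> j div l \<le> i div l + 1 \<and> i div l \<le> j div l + 1"
proof -
  define n where "n = i div l"
  define m where "m = j div l"
  define a where "a = i mod l"
  define b where "b = j mod l"
  define site where "site = (\<lambda>k::nat. x + real (k + 1) * \<omega>)"
  define s where "s = sqrt (1 + E\<^sup>2)"
  define u where "u = lam + \<bar>E\<bar> + 1"
  have s: "s > 0" unfolding s_def by (simp add: add_pos_nonneg)
  have ab: "a < l" "b < l" using l unfolding a_def b_def by auto
  define D where "D = lam * phtF a (site n) * phR a (site n) - phtR a (site n) * phF a (site n)
              - E * phF a (site n) * phR a (site n)"
  define Of where "Of = (lam * F a b (site n) - R a b (site n)) * Mdiag phF phR b (site n)"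
  define U where "U = - W a b (site m) * Mdiag phF phR b (site m)"
  define L where "L = - W b a (site n) * Mdiag phF phR b (site m)"
  have H: "tildeH l N W R F phF phtF phR phtR \<omega> lam E x $$ (i,j) =
     (if m = n then (if a = b then D else Of) else if m = n+1 then U else if n = m+1 then L else 0) / s"
    unfolding tildeH_def using ij
    by (simp add: Let_def n_def m_def a_def b_def site_def s_def D_def Of_def U_def L_def)
  have K2: "K^2 \<le> K^3" using K by (simp add: power_increasing)
  have KK: "\<bar>phF c y * phR c y\<bar> \<le> K * K" if "c < l" for c y
    using bph[OF that] by (intro abs_mult_le) auto
  have bM: "\<bar>Mdiag phF phR c y\<bar> \<le> K * K" if "c < l" for c y
    using KK[OF that] by (simp add: Mdiag_def)
  have bD: "\<bar>D\<bar> \<le> K^3 * u"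
  proof -
    have 1: "\<bar>lam * phtF a (site n) * phR a (site n)\<bar> \<le> lam * (K*K)"
      using bph[OF ab(1)] lam by (simp add: abs_mult mult.assoc mult_mono')
    have 2: "\<bar>phtR a (site n) * phF a (site n)\<bar> \<le> K * K"
      using bph[OF ab(1)] by (intro abs_mult_le) auto
    have 3: "\<bar>E * phF a (site n) * phR a (site n)\<bar> \<le> \<bar>E\<bar> * (K*K)"
      using KK[OF ab(1)] by (simp add: abs_mult mult.assoc mult_left_mono)
    have "\<bar>D\<bar> \<le> lam * (K*K) + K*K + \<bar>E\<bar> * (K*K)"
      unfolding D_def using 1 2 3 by linarith
    also have "\<dots> = K^2 * u" unfolding u_def by (simp add: algebra_simps power2_eq_square)
    also have "\<dots> \<le> K^3 * u" using K2 lam unfolding u_def by (intro mult_right_mono) auto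
    finally show ?thesis .
  qed
  have bOf: "a \<noteq> b \<Longrightarrow> \<bar>Of\<bar> \<le> K^3 * u"
  proof -
    assume ne: "a \<noteq> b"
    have "\<bar>lam * F a b (site n) - R a b (site n)\<bar> \<le> lam * K + K"
    proof -
      have "\<bar>lam * F a b (site n)\<bar> \<le> lam * K"
        using bF[OF ab ne, of "site n"] lam by (simp add: abs_mult mult_left_mono)
      thus ?thesis using bR[OF ab ne, of "site n"] by linarith
    qed
    hence "\<bar>Of\<bar> \<le> (lam * K + K) * (K * K)" unfolding Of_def using bM[OF ab(2)] by (intro abs_mult_le)
    also have "\<dots> = K^3 * (lam + 1)" by (simp add: algebra_simps power3_eq_cube)
    also have "\<dots> \<le> K^3 * u" unfolding u_def using K by (intro mult_left_mono) auto
    finally show ?thesis .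
  qed
  have bU: "\<bar>U\<bar> \<le> K^3" unfolding U_def
    using abs_mult_le[OF bW[OF ab, of "site m"] bM[OF ab(2), of "site m"]] by (simp add: power3_eq_cube mult.assoc)
  have bL: "\<bar>L\<bar> \<le> K^3" unfolding L_def
    using abs_mult_le[OF bW[OF ab(2) ab(1), of "site n"] bM[OF ab(2), of "site m"]] by (simp add: power3_eq_cube mult.assoc)
  have K3: "K^3 \<ge> 0" using K by simp
  have u1: "u \<ge> 1" unfolding u_def using lam by simp
  show "\<bar>tildeH l N W R F phF phtF phR phtR \<omega> lam E x $$ (i,j)\<bar> * t powr (real (i div l) - real (j div l))
           \<le> K^3 * (lam + \<bar>E\<bar> + 1) / sqrt (1 + E\<^sup>2)"
  proof -
    have "\<bar>(if m = n then (if a = b then D else Of) else if m = n+1 then U else if n = m+1 then L else 0)\<bar>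
          * t powr (real n - real m) \<le> K^3 * u"
    proof (cases "m = n")
      case True then show ?thesis using bD bOf by auto
    next
      case F1: False
      show ?thesis
      proof (cases "m = n+1")
        case True
        have "t powr (real n - real m) = 1/t" using True t by (simp add: powr_minus_divide)
        moreover have "\<bar>U\<bar> * (1/t) \<le> K^3 * u"
          using bU t by (intro mult_mono') (auto simp: u_def)
        ultimately show ?thesis using F1 True by simp
      next
        case F2: False
        show ?thesis
        proof (cases "n = m+1")
          case True
          have "t powr (real n - real m) = t" using True t by simp
          moreover have "\<bar>L\<bar> * t \<le> K^3 * u"
            using bL t by (intro mult_mono') (auto simp: u_def)
          ultimately show ?thesis using F1 F2 True by simp
        qed (use F1 F2 K3 u1 in simp)
      qed
    qed
    hence "\<bar>tildeH l N W R F phF phtF phR phtR \<omega> lam E x $$ (i,j)\<bar> * t powr (real (i div l) - real (j div l))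
        = (\<bar>(if m = n then (if a = b then D else Of) else if m = n+1 then U else if n = m+1 then L else 0)\<bar>
          * t powr (real n - real m)) / s" unfolding H n_def m_def using s by simp
    also have "\<dots> \<le> K^3 * u / s" using s
      \<open>\<bar>(if m = n then (if a = b then D else Of) else if m = n+1 then U else if n = m+1 then L else 0)\<bar>
          * t powr (real n - real m) \<le> K^3 * u\<close> by (simp add: divide_right_mono)
    finally show ?thesis unfolding u_def s_def .
  qed
  show "tildeH l N W R F phF phtF phR phtR \<omega> lam E x $$ (i,j) \<noteq> 0 \<Longrightarrow> j div l \<le> i div l + 1 \<and> i div l \<le> j div l + 1"
    unfolding H n_def[symmetric] m_def[symmetric] by (auto split: if_splits)
qed

lemma sum_window:
  fixes w :: "nat \<Rightarrow> real"
  assumes "\<And>c. c \<in> {0..<m} \<Longrightarrow> 0 \<le> w c \<and> w c \<le> T" "\<And>c. c \<in> {0..<m} \<Longrightarrow> w c \<noteq> 0 \<Longrightarrow> L \<le> c \<and> c < U"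
    "U \<le> L + k" "T \<ge> 0"
  shows "sum w {0..<m} \<le> real k * T"
proof -
  have "sum w {0..<m} = sum w ({0..<m} \<inter> {L..<U})"
    by (rule sum.mono_neutral_right) (use assms(2) in force)+
  also have "\<dots> \<le> real (card ({0..<m} \<inter> {L..<U})) * T"
    by (rule sum_bounded_above) (use assms(1) in auto)
  also have "card ({0..<m} \<inter> {L..<U}) \<le> k"
  proof -
    have "card ({0..<m} \<inter> {L..<U}) \<le> card {L..<U}" by (intro card_mono) auto
    thus ?thesis using assms(3) by simp
  qed
  hence "real (card ({0..<m} \<inter> {L..<U})) * T \<le> real k * T" using assms(4) by (intro mult_right_mono) auto
  finally show ?thesis .
qed

lemma window_nat:
  fixes l B c j :: nat
  assumes l: "l > 0" and j: "j = c \<or> j = Suc c" and h: "j div l \<le> B + 1" "B \<le> j div l + 1"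
  shows "B*l - (l+1) \<le> c \<and> c < B*l + 2*l"
proof -
  have d: "j div l * l \<le> j" "j < j div l * l + l"
    using l by (simp_all add: div_times_less_eq_dividend) (metis div_mult_mod_eq add_less_cancel_left mod_less_divisor)
  have "j div l * l \<le> (B+1) * l" using h(1) by (intro mult_right_mono) auto
  hence 1: "c < B*l + 2*l" using d j by (auto simp: algebra_simps)
  have "B * l \<le> (j div l + 1) * l" using h(2) by (intro mult_right_mono) auto
  moreover have "(j div l + 1)*l = j div l * l + l" by (simp add: distrib_right)
  ultimately have "B*l \<le> j + l" using d(1) by linarith
  hence 2: "B*l - (l+1) \<le> c" using j by arith
  show ?thesis using 1 2 by simp
qed

lemma sum_insert_index:
  fixes g :: "nat \<Rightarrow> real"
  assumes "k < Suc m"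
  shows "(\<Sum>r\<in>{0..<m}. g (insert_index k r)) = (\<Sum>i\<in>{0..<Suc m}. g i) - g k"
proof -
  have "(\<Sum>r\<in>{0..<m}. g (insert_index k r)) = sum g (insert_index k ` {0..<m})"
    by (rule sum.reindex[symmetric, unfolded comp_def]) (rule insert_index_inj_on)?
  also have "\<dots> = sum g ({0..<Suc m} - {k})" using insert_index_image[OF assms] by simp
  also have "\<dots> = (\<Sum>i\<in>{0..<Suc m}. g i) - g k" using assms by (simp add: sum_diff1)
  finally show ?thesis .
qed

lemma coef_bound:
  fixes lam E :: real assumes "lam > 0" "E \<noteq> 0"
  shows "(lam + \<bar>E\<bar> + 1) / sqrt (1 + E\<^sup>2) \<le> 2 * (1 + lam / \<bar>E\<bar>)"
proof -
  define s where "s = sqrt (1 + E\<^sup>2)"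
  have s1: "s \<ge> 1" unfolding s_def by simp
  have sE: "s \<ge> \<bar>E\<bar>" unfolding s_def using real_sqrt_abs[of E] real_sqrt_le_mono[of "E\<^sup>2" "1+E\<^sup>2"] by simp
  have E: "\<bar>E\<bar> > 0" using assms by simp
  have "lam \<le> 2 * s * lam / \<bar>E\<bar>"
    using E sE assms(1) by (simp add: field_simps)
  hence "lam + \<bar>E\<bar> + 1 \<le> s * (2 * (1 + lam / \<bar>E\<bar>))" using s1 sE by (simp add: algebra_simps)
  thus ?thesis using s1 by (simp add: s_def[symmetric] pos_divide_le_eq mult.commute)
qed


lemma choose_t:
  fixes u p p' :: real assumes "u > 0"
  shows "\<exists>t>0. t \<le> u+1 \<and> 1/t \<le> u+1 \<and> (p' - p) * ln t \<le> - \<bar>p - p'\<bar> * ln u"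
proof (cases "u \<ge> 1")
  case True
  have l0: "ln u \<ge> 0" using True by simp
  show ?thesis
  proof (cases "p' \<ge> p")
    case True
    have "(p' - p) * ln (1/u) = - \<bar>p - p'\<bar> * ln u" using True assms by (simp add: ln_div algebra_simps)
    moreover have "1/u \<le> u + 1"
    proof -
      have "1/u \<le> 1" using \<open>u \<ge> 1\<close> by simp
      thus ?thesis using \<open>u \<ge> 1\<close> by linarith
    qed
    ultimately show ?thesis using assms by (intro exI[of _ "1/u"]) auto
  next
    case False
    have "(p' - p) * ln u = - \<bar>p - p'\<bar> * ln u" using False by simp
    moreover have "1/u \<le> u + 1"
    proof -
      have "1/u \<le> 1" using \<open>u \<ge> 1\<close> by simp
      thus ?thesis using \<open>u \<ge> 1\<close> by linarith
    qed
    ultimately show ?thesis using assms by (intro exI[of _ u]) auto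
  qed
next
  case False
  hence "ln u < 0" using assms by simp
  hence "0 \<le> - \<bar>p - p'\<bar> * ln u" by (simp add: mult_nonneg_nonpos)
  thus ?thesis using assms by (intro exI[of _ 1]) auto
qed

definition bd :: "(real \<Rightarrow> real) \<Rightarrow> real" where "bd f = (SOME K. \<forall>y. \<bar>f y\<bar> \<le> K)"

lemma bd_le: "real_analytic f \<Longrightarrow> periodic_2pi f \<Longrightarrow> \<bar>f y\<bar> \<le> bd f"
  using someI_ex[OF analytic_periodic_bounded] unfolding bd_def by blast

theorem proposition2p1:
  fixes l :: nat and W R F :: "nat \<Rightarrow> nat \<Rightarrow> real \<Rightarrow> real"
    and phF phtF phR phtR :: "nat \<Rightarrow> real \<Rightarrow> real" and \<omega> :: real
  assumes l: "l \<ge> 1"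
    and symW: "\<And>i j x. i < l \<Longrightarrow> j < l \<Longrightarrow> W i j x = W j i x"
    and symR: "\<And>i j x. i < l \<Longrightarrow> j < l \<Longrightarrow> R i j x = R j i x"
    and symF: "\<And>i j x. i < l \<Longrightarrow> j < l \<Longrightarrow> F i j x = F j i x"
    and anW: "\<And>i j. i < l \<Longrightarrow> j < l \<Longrightarrow> real_analytic (W i j) \<and> periodic_2pi (W i j)"
    and anR: "\<And>i j. i < l \<Longrightarrow> j < l \<Longrightarrow> i \<noteq> j \<Longrightarrow> real_analytic (R i j) \<and> periodic_2pi (R i j)"
    and anF: "\<And>i j. i < l \<Longrightarrow> j < l \<Longrightarrow> i \<noteq> j \<Longrightarrow> real_analytic (F i j) \<and> periodic_2pi (F i j)"
    and anphi: "\<And>i. i < l \<Longrightarrow>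
        real_analytic (phF i) \<and> periodic_2pi (phF i) \<and>
        real_analytic (phtF i) \<and> periodic_2pi (phtF i) \<and>
        real_analytic (phR i) \<and> periodic_2pi (phR i) \<and>
        real_analytic (phtR i) \<and> periodic_2pi (phtR i)"
    and zerosF: "\<And>i. i < l \<Longrightarrow> finite {x \<in> {0..<2 * pi}. phF i x = 0}"
    and zerosR: "\<And>i. i < l \<Longrightarrow> finite {x \<in> {0..<2 * pi}. phR i x = 0}"
    and diagF: "\<And>i x. i < l \<Longrightarrow> phF i x \<noteq> 0 \<Longrightarrow> F i i x = phtF i x / phF i x"
    and diagR: "\<And>i x. i < l \<Longrightarrow> phR i x \<noteq> 0 \<Longrightarrow> R i i x = phtR i x / phR i x"
  shows "\<exists>C>0. \<forall>N::nat. \<forall>lam::real. \<forall>E::real. \<forall>x::real. \<forall>\<alpha> \<alpha>'.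
      N > 1 \<longrightarrow> lam > 0 \<longrightarrow> E \<noteq> 0 \<longrightarrow>
      \<alpha> \<in> {1..N * l} \<longrightarrow> \<alpha>' \<in> {1..N * l} \<longrightarrow>
      tildemu l N W R F phF phtF phR phtR \<omega> lam E x \<alpha> \<alpha>' \<noteq> 0 \<longrightarrow>
      1 / real (N * l) * ln \<bar>tildemu l N W R F phF phtF phR phtR \<omega> lam E x \<alpha> \<alpha>'\<bar>
        \<le> - real_of_int \<bar>int (pidx l \<alpha>) - int (pidx l \<alpha>')\<bar> / real (N * l) * ln (lam + \<bar>E\<bar>)
           + ln (1 + lam / \<bar>E\<bar>) + C"
proof -
  define S1 where "S1 = (\<lambda>a b. \<bar>bd (W a b)\<bar> + \<bar>bd (F a b)\<bar> + \<bar>bd (R a b)\<bar>)"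
  define S2 where "S2 = (\<lambda>a. \<bar>bd (phF a)\<bar> + \<bar>bd (phtF a)\<bar> + \<bar>bd (phR a)\<bar> + \<bar>bd (phtR a)\<bar>)"
  define K where "K = 1 + (\<Sum>a<l. \<Sum>b<l. S1 a b) + (\<Sum>a<l. S2 a)"
  have S1n: "S1 a b \<ge> 0" for a b unfolding S1_def by simp
  have S2n: "S2 a \<ge> 0" for a unfolding S2_def by simp
  have K1: "K \<ge> 1" unfolding K_def using S1n S2n by (simp add: sum_nonneg)
  have S1K: "S1 a b \<le> K" if "a < l" "b < l" for a b
  proof -
    have "S1 a b \<le> (\<Sum>b<l. S1 a b)" by (rule member_le_sum) (use that S1n in auto)
    also have "\<dots> \<le> (\<Sum>a<l. \<Sum>b<l. S1 a b)" by (rule member_le_sum) (use that S1n in \<open>auto intro: sum_nonneg\<close>)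
    finally show ?thesis unfolding K_def using S2n by (simp add: sum_nonneg) (smt (verit) sum_nonneg S2n)
  qed
  have S2K: "S2 a \<le> K" if "a < l" for a
  proof -
    have "S2 a \<le> (\<Sum>a<l. S2 a)" by (rule member_le_sum) (use that S2n in auto)
    thus ?thesis unfolding K_def using S1n by (smt (verit) sum_nonneg)
  qed
  have bW: "\<And>a b y. a<l \<Longrightarrow> b<l \<Longrightarrow> \<bar>W a b y\<bar> \<le> K"
  proof -
    fix a b y assume ab: "a < l" "b < l"
    have "\<bar>W a b y\<bar> \<le> bd (W a b)" using bd_le anW[OF ab] by blast
    thus "\<bar>W a b y\<bar> \<le> K" using S1K[OF ab] unfolding S1_def by simp
  qed
  have bF: "\<And>a b y. a<l \<Longrightarrow> b<l \<Longrightarrow> a\<noteq>b \<Longrightarrow> \<bar>F a b y\<bar> \<le> K"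
  proof -
    fix a b y assume ab: "a < l" "b < l" "a \<noteq> b"
    have "\<bar>F a b y\<bar> \<le> bd (F a b)" using bd_le anF[OF ab] by blast
    thus "\<bar>F a b y\<bar> \<le> K" using S1K[OF ab(1,2)] unfolding S1_def by simp
  qed
  have bR: "\<And>a b y. a<l \<Longrightarrow> b<l \<Longrightarrow> a\<noteq>b \<Longrightarrow> \<bar>R a b y\<bar> \<le> K"
  proof -
    fix a b y assume ab: "a < l" "b < l" "a \<noteq> b"
    have "\<bar>R a b y\<bar> \<le> bd (R a b)" using bd_le anR[OF ab] by blast
    thus "\<bar>R a b y\<bar> \<le> K" using S1K[OF ab(1,2)] unfolding S1_def by simp
  qed
  have bph: "\<And>a y. a<l \<Longrightarrow> \<bar>phF a y\<bar> \<le> K \<and> \<bar>phtF a y\<bar> \<le> K \<and> \<bar>phR a y\<bar> \<le> K \<and> \<bar>phtR a y\<bar> \<le> K"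
  proof -
    fix a y assume a: "a < l"
    have "\<bar>phF a y\<bar> \<le> bd (phF a)" "\<bar>phtF a y\<bar> \<le> bd (phtF a)" "\<bar>phR a y\<bar> \<le> bd (phR a)" "\<bar>phtR a y\<bar> \<le> bd (phtR a)"
      using bd_le anphi[OF a] by blast+
    thus "\<bar>phF a y\<bar> \<le> K \<and> \<bar>phtF a y\<bar> \<le> K \<and> \<bar>phR a y\<bar> \<le> K \<and> \<bar>phtR a y\<bar> \<le> K"
      using S2K[OF a] unfolding S2_def by auto
  qed
  define C where "C = ln (8 * real l * K^3) + 1"
  have lK: "8 * real l * K^3 \<ge> 8"
  proof -
    have "K^3 \<ge> 1" using K1 by simp
    moreover have "real l \<ge> 1" using l by simp
    ultimately have "real l * K^3 \<ge> 1 * 1" by (intro mult_mono) auto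
    thus ?thesis by simp
  qed
  hence C: "C > 0" unfolding C_def using ln_gt_zero[of "8 * real l * K^3"] by linarith
  show ?thesis
  proof (intro exI[of _ C] conjI C allI impI)
    fix N :: nat and lam E x :: real and \<alpha> \<alpha>' :: nat
    assume N: "N > 1" and lam: "lam > 0" and E: "E \<noteq> 0" and al: "\<alpha> \<in> {1..N*l}" and al': "\<alpha>' \<in> {1..N*l}"
      and mu0: "tildemu l N W R F phF phtF phR phtR \<omega> lam E x \<alpha> \<alpha>' \<noteq> 0"
    define n where "n = N * l"
    define m where "m = n - 1"
    have n2: "n \<ge> 2" unfolding n_def using mult_le_mono[of 2 N 1 l] N l by simp
    have nm: "n = Suc m" unfolding m_def using n2 by simp
    define u where "u = lam + \<bar>E\<bar>"
    have u: "u > 0" unfolding u_def using lam by simp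
    define P where "P = (\<alpha> - 1) div l"
    define P' where "P' = (\<alpha>' - 1) div l"
    obtain t where t: "t > 0" "t \<le> u+1" "1/t \<le> u+1" and tl: "(real P' - real P) * ln t \<le> - \<bar>real P - real P'\<bar> * ln u"
      using choose_t[OF u] by blast
    define H where "H = tildeH l N W R F phF phtF phR phtR \<omega> lam E x"
    define Mx where "Mx = mat_delete H (\<alpha>' - 1) (\<alpha> - 1)"
    have dH: "dim_row H = n" "dim_col H = n" unfolding H_def tildeH_def n_def by simp_all
    have dM: "dim_row Mx = m" "dim_col Mx = m" unfolding Mx_def m_def using dH by simp_all
    define rho where "rho = insert_index (\<alpha>' - 1)"
    define gam where "gam = insert_index (\<alpha> - 1)"
    have Mx_ent: "Mx $$ (r,c) = H $$ (rho r, gam c)" if "r < m" "c < m" for r c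
      unfolding Mx_def mat_delete_def rho_def gam_def insert_index_def using that dH m_def by simp
    have rho_lt: "rho r < n" if "r < m" for r unfolding rho_def insert_index_def using that nm by auto
    have gam_lt: "gam r < n" if "r < m" for r unfolding gam_def insert_index_def using that nm by auto
    have rho_cases: "rho r = r \<or> rho r = Suc r" for r unfolding rho_def insert_index_def by auto
    have gam_cases: "gam r = r \<or> gam r = Suc r" for r unfolding gam_def insert_index_def by auto
    define aa where "aa = (\<lambda>r. real (rho r div l))"
    define bb where "bb = (\<lambda>c. real (gam c div l))"
    have mu_eq: "tildemu l N W R F phF phtF phR phtR \<omega> lam E x \<alpha> \<alpha>' = Determinant.det Mx"
      unfolding tildemu_def Mx_def H_def ..
    have detb: "\<bar>Determinant.det Mx\<bar> \<le> t powr (\<Sum>r\<in>{0..<m}. bb r - aa r) *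
       (\<Prod>r\<in>{0..<m}. \<Sum>c\<in>{0..<m}. \<bar>Mx $$ (r,c)\<bar> * t powr (aa r - bb c))"
      by (rule det_weighted_bound[OF dM t(1)])
    have sumeq: "(\<Sum>r\<in>{0..<m}. bb r - aa r) = real P' - real P"
    proof -
      have a1: "\<alpha> - 1 < Suc m" "\<alpha>' - 1 < Suc m" using al al' nm n_def by auto
      have "(\<Sum>r\<in>{0..<m}. bb r) = (\<Sum>i\<in>{0..<Suc m}. real (i div l)) - real P"
        unfolding bb_def gam_def P_def by (rule sum_insert_index[OF a1(1)])
      moreover have "(\<Sum>r\<in>{0..<m}. aa r) = (\<Sum>i\<in>{0..<Suc m}. real (i div l)) - real P'"
        unfolding aa_def rho_def P'_def by (rule sum_insert_index[OF a1(2)])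
      ultimately show ?thesis by (simp add: sum_subtractf)
    qed
    define s where "s = sqrt (1 + E\<^sup>2)"
    have s: "s > 0" unfolding s_def by (simp add: add_pos_nonneg)
    define T where "T = K^3 * (lam + \<bar>E\<bar> + 1) / s"
    have T0: "T \<ge> 0" unfolding T_def using K1 lam s by simp
    define Q where "Q = 8 * real l * K^3 * (1 + lam / \<bar>E\<bar>)"
    have Q1: "Q \<ge> 1"
    proof -
      have "1 + lam / \<bar>E\<bar> \<ge> 1" using lam by simp
      hence "Q \<ge> 8 * real l * K^3" unfolding Q_def using lK by (simp add: mult_le_cancel_left1)
      thus ?thesis using lK by simp
    qed
    have TQ: "real (4*l) * T \<le> Q"
    proof -
      have "T \<le> K^3 * (2 * (1 + lam / \<bar>E\<bar>))" unfolding T_def s_def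
        using coef_bound[OF lam E] K1 by (simp add: times_divide_eq_right[symmetric] mult_left_mono del: times_divide_eq_right)
      hence "real (4*l) * T \<le> real (4*l) * (K^3 * (2 * (1 + lam / \<bar>E\<bar>)))" by (intro mult_left_mono) auto
      thus ?thesis unfolding Q_def by (simp add: algebra_simps)
    qed
    have EB1: "\<And>i j. i < n \<Longrightarrow> j < n \<Longrightarrow> \<bar>H $$ (i,j)\<bar> * t powr (real (i div l) - real (j div l)) \<le> T"
    proof -
      fix i j assume ij: "i < n" "j < n"
      show "\<bar>H $$ (i,j)\<bar> * t powr (real (i div l) - real (j div l)) \<le> T"
        unfolding H_def T_def s_def
        by (rule entry_bound(1)[OF l K1]) (use bW bF bR bph lam t ij in \<open>auto simp: u_def n_def\<close>)
    qed
    have EB2: "\<And>i j. i < n \<Longrightarrow> j < n \<Longrightarrow> H $$ (i,j) \<noteq> 0 \<Longrightarrow> j div l \<le> i div l + 1 \<and> i div l \<le> j div l + 1"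
    proof -
      fix i j assume ij: "i < n" "j < n" and nz: "H $$ (i,j) \<noteq> 0"
      show "j div l \<le> i div l + 1 \<and> i div l \<le> j div l + 1"
        by (rule entry_bound(2)[OF l K1, where t = t and ?N = N and W = W and R = R and F = F and phF = phF and phtF = phtF and phR = phR and phtR = phtR and lam = lam and E = E and \<omega> = \<omega> and x = x])
          (use bW bF bR bph lam t ij nz in \<open>auto simp: u_def n_def H_def\<close>)
    qed
    have rowb: "(\<Sum>c\<in>{0..<m}. \<bar>Mx $$ (r,c)\<bar> * t powr (aa r - bb c)) \<le> Q" if r: "r \<in> {0..<m}" for r
    proof -
      define B where "B = rho r div l"
      have "(\<Sum>c\<in>{0..<m}. \<bar>Mx $$ (r,c)\<bar> * t powr (aa r - bb c)) \<le> real (4*l) * T"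
      proof (rule sum_window[where L = "B*l - (l+1)" and U = "B*l + 2*l"])
        fix c assume c: "c \<in> {0..<m}"
        have e: "\<bar>Mx $$ (r,c)\<bar> * t powr (aa r - bb c) = \<bar>H $$ (rho r, gam c)\<bar> * t powr (real (rho r div l) - real (gam c div l))"
          using Mx_ent r c aa_def bb_def by simp
        show "0 \<le> \<bar>Mx $$ (r,c)\<bar> * t powr (aa r - bb c) \<and> \<bar>Mx $$ (r,c)\<bar> * t powr (aa r - bb c) \<le> T"
          unfolding e using EB1[OF rho_lt gam_lt] r c by auto
        assume nz: "\<bar>Mx $$ (r,c)\<bar> * t powr (aa r - bb c) \<noteq> 0"
        hence "H $$ (rho r, gam c) \<noteq> 0" using e by auto
        hence "gam c div l \<le> rho r div l + 1 \<and> rho r div l \<le> gam c div l + 1"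
          using EB2[OF rho_lt gam_lt] r c by auto
        thus "B*l - (l+1) \<le> c \<and> c < B*l + 2*l"
          unfolding B_def using window_nat[of l "gam c" c "rho r div l"] l gam_cases by auto
      next
        have "\<And>X::nat. X + 2 * l \<le> X - (l + 1) + 4 * l" using l by arith
        thus "B * l + 2 * l \<le> B * l - (l + 1) + 4 * l" by blast
      qed (rule T0)
      thus ?thesis using TQ by linarith
    qed
    have prodb: "(\<Prod>r\<in>{0..<m}. \<Sum>c\<in>{0..<m}. \<bar>Mx $$ (r,c)\<bar> * t powr (aa r - bb c)) \<le> Q ^ n"
      by (rule prod_le_power) (use rowb Q1 nm in \<open>auto intro: sum_nonneg\<close>)
    have mub: "\<bar>Determinant.det Mx\<bar> \<le> t powr (real P' - real P) * Q ^ n"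
    proof -
      have "\<bar>Determinant.det Mx\<bar> \<le> t powr (real P' - real P) *
         (\<Prod>r\<in>{0..<m}. \<Sum>c\<in>{0..<m}. \<bar>Mx $$ (r,c)\<bar> * t powr (aa r - bb c))"
        using detb unfolding sumeq .
      also have "\<dots> \<le> t powr (real P' - real P) * Q ^ n"
        by (rule mult_left_mono[OF prodb]) simp
      finally show ?thesis .
    qed
    have dpos: "\<bar>Determinant.det Mx\<bar> > 0" using mu0 mu_eq by simp
    have "ln \<bar>Determinant.det Mx\<bar> \<le> ln (t powr (real P' - real P) * Q ^ n)"
      using mub dpos by (simp)
    also have "\<dots> = (real P' - real P) * ln t + real n * ln Q"
      using t(1) Q1 by (simp add: ln_mult ln_powr ln_realpow)
    finally have lnb: "ln \<bar>Determinant.det Mx\<bar> \<le> (real P' - real P) * ln t + real n * ln Q" .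
    have npos: "real n > 0" using n2 by simp
    have "1 / real n * ln \<bar>Determinant.det Mx\<bar> \<le> 1 / real n * ((real P' - real P) * ln t + real n * ln Q)"
      using lnb npos by (intro mult_left_mono) auto
    also have "\<dots> = (real P' - real P) * ln t / real n + ln Q" using npos by (simp add: field_simps)
    also have "\<dots> \<le> - \<bar>real P - real P'\<bar> * ln u / real n + ln Q"
      using divide_right_mono[OF tl, of "real n"] npos by simp
    also have "ln Q = ln (8 * real l * K^3) + ln (1 + lam / \<bar>E\<bar>)"
    proof -
      have "1 + lam / \<bar>E\<bar> > 0" using lam by (simp add: add_pos_nonneg)
      thus ?thesis unfolding Q_def using lK by (subst ln_mult) auto
    qed
    finally have fin: "1 / real n * ln \<bar>Determinant.det Mx\<bar> \<le> - \<bar>real P - real P'\<bar> * ln u / real n + (ln (8 * real l * K^3) + ln (1 + lam / \<bar>E\<bar>))" .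
    have idx: "real_of_int \<bar>int (pidx l \<alpha>) - int (pidx l \<alpha>')\<bar> = \<bar>real P - real P'\<bar>"
      unfolding pidx_def P_def P'_def by simp
    show "1 / real (N * l) * ln \<bar>tildemu l N W R F phF phtF phR phtR \<omega> lam E x \<alpha> \<alpha>'\<bar>
        \<le> - real_of_int \<bar>int (pidx l \<alpha>) - int (pidx l \<alpha>')\<bar> / real (N * l) * ln (lam + \<bar>E\<bar>)
           + ln (1 + lam / \<bar>E\<bar>) + C"
      unfolding idx mu_eq n_def[symmetric] u_def[symmetric] C_def using fin by simp
  qed
qed

end
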